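(* Let $\hat A,\hat B,\hat C,\hat D$ be matrices with entries in $NCFD$ of sizes $k\times m$, $p\times s$, $m\times n$, $s\times r$ respectively. Then $$(\hat A\otimes\hat B)\odot(\hat C\otimes\hat D)=(\hat A\odot\hat C)\otimes(\hat B\odot\hat D).$$
   Context: $NCFD$ is the set of normal convex type-1 fuzzy sets $\mu:[0,1]\to[0,1]$ ($\max_u\mu(u)=1$, and $\mu(u_j)\ge\min\{\mu(u_i),\mu(u_k)\}$ for $u_i\le u_j\le u_k$). Operations: $(\mu_1\sqcup\mu_2)(v)=\sup\{\min(\mu_1(u),\mu_2(w)):\max(u,w)=v\}$, $(\mu_1\sqcap\mu_2)(v)=\sup\{\min(\mu_1(u),\mu_2(w)):\min(u,w)=v\}$. For matrices $R$ ($a\times b$) and $S$ ($b\times c$) with entries in $NCFD$, $R\odot S$ is the $a\times c$ matrix $(R\odot S)(x,z)=\bigsqcup_{y=1}^{b}[R(x,y)\sqcap S(y,z)]$. For $\hat A=[\tilde a_{ij}]$ ($k\times m$) and $\hat B=[\tilde b_{pq}]$ ($p\times s$), the bi-fuzzy tensor $\hat A\otimes\hat B$ is the $kp\times ms$ block matrix whose $(i,j)$ block is $\tilde a_{ij}\sqcap\hat B:=[\tilde a_{ij}\sqcap\tilde b_{pq}]_{p,q}$. *)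

theory Defs
  imports Main "HOL.Real"
begin

text \<open>Type-1 fuzzy sets on [0,1] are represented as functions real \<Rightarrow> real;
only their values on [0,1] are meaningful. The operations below return 0 outside [0,1].\<close>

type_synonym fz = "real \<Rightarrow> real"

definition NCFD :: "fz set" where
  "NCFD = {\<mu>. (\<forall>u\<in>{0..1}. 0 \<le> \<mu> u \<and> \<mu> u \<le> 1)
             \<and> (\<exists>u\<in>{0..1}. \<mu> u = 1)
             \<and> (\<forall>ui uj uk. 0 \<le> ui \<and> ui \<le> uj \<and> uj \<le> uk \<and> uk \<le> 1
                   \<longrightarrow> \<mu> uj \<ge> min (\<mu> ui) (\<mu> uk))}"

definition fjoin :: "fz \<Rightarrow> fz \<Rightarrow> fz" where
  "fjoin \<mu>1 \<mu>2 = (\<lambda>v. if v \<in> {0..1}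
     then Sup {min (\<mu>1 u) (\<mu>2 w) | u w. u \<in> {0..1} \<and> w \<in> {0..1} \<and> max u w = v}
     else 0)"

definition fmeet :: "fz \<Rightarrow> fz \<Rightarrow> fz" where
  "fmeet \<mu>1 \<mu>2 = (\<lambda>v. if v \<in> {0..1}
     then Sup {min (\<mu>1 u) (\<mu>2 w) | u w. u \<in> {0..1} \<and> w \<in> {0..1} \<and> min u w = v}
     else 0)"

fun bigjoin :: "(nat \<Rightarrow> fz) \<Rightarrow> nat \<Rightarrow> fz" where
  "bigjoin f 0 = (\<lambda>_. 0)"
| "bigjoin f (Suc 0) = f 0"
| "bigjoin f (Suc (Suc n)) = fjoin (bigjoin f (Suc n)) (f (Suc n))"

text \<open>Matrices: entry functions, 0-based indices; dimensions tracked separately.\<close>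
type_synonym fmat = "nat \<Rightarrow> nat \<Rightarrow> fz"

definition fmat_in :: "nat \<Rightarrow> nat \<Rightarrow> fmat \<Rightarrow> bool" where
  "fmat_in a b R \<longleftrightarrow> (\<forall>i<a. \<forall>j<b. R i j \<in> NCFD)"

text \<open>Composition R \<odot> S, where b is the number of columns of R (= rows of S).\<close>
definition fcomp :: "nat \<Rightarrow> fmat \<Rightarrow> fmat \<Rightarrow> fmat" where
  "fcomp b R S = (\<lambda>x z. bigjoin (\<lambda>y. fmeet (R x y) (S y z)) b)"

text \<open>Bi-fuzzy tensor A \<otimes> B, where B is p \<times> s: block (i,j) is a_ij \<sqcap> B.\<close>
definition ftensor :: "nat \<Rightarrow> nat \<Rightarrow> fmat \<Rightarrow> fmat \<Rightarrow> fmat" where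
  "ftensor p s A B = (\<lambda>x y. fmeet (A (x div p) (y div s)) (B (x mod p) (y mod s)))"

end

theory Submission
  imports Defs
begin

definition Lf :: "fz \<Rightarrow> real \<Rightarrow> real" where "Lf f v = Sup (f ` {0..v})"
definition Rf :: "fz \<Rightarrow> real \<Rightarrow> real" where "Rf f v = Sup (f ` {v..1})"
definition bnd :: "fz \<Rightarrow> bool" where "bnd f \<longleftrightarrow> (\<forall>u\<in>{0..1}. 0 \<le> f u \<and> f u \<le> 1)"
definition att :: "fz \<Rightarrow> bool" where "att f \<longleftrightarrow> (\<exists>u\<in>{0..1}. f u = 1)"
definition cvx :: "fz \<Rightarrow> bool" where "cvx f \<longleftrightarrow> (\<forall>v\<in>{0..1}. f v = min (Lf f v) (Rf f v))"
definition PP :: "fz \<Rightarrow> bool" where "PP f \<longleftrightarrow> bnd f \<and> att f \<and> cvx f"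

lemma bdd_img: "bnd f \<Longrightarrow> S \<subseteq> {0..1} \<Longrightarrow> bdd_above (f ` S)"
  unfolding bnd_def bdd_above_def by (rule exI[of _ 1]) auto

lemma Lf_upper: "bnd f \<Longrightarrow> 0 \<le> u \<Longrightarrow> u \<le> v \<Longrightarrow> v \<le> 1 \<Longrightarrow> f u \<le> Lf f v"
  unfolding Lf_def by (rule cSup_upper) (auto intro: bdd_img)

lemma Rf_upper: "bnd f \<Longrightarrow> 0 \<le> v \<Longrightarrow> v \<le> u \<Longrightarrow> u \<le> 1 \<Longrightarrow> f u \<le> Rf f v"
  unfolding Rf_def by (rule cSup_upper) (auto intro: bdd_img)

lemma Lf_least: "0 \<le> v \<Longrightarrow> (\<And>u. 0 \<le> u \<Longrightarrow> u \<le> v \<Longrightarrow> f u \<le> y) \<Longrightarrow> Lf f v \<le> y"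
  unfolding Lf_def by (rule cSup_least) auto

lemma Rf_least: "v \<le> 1 \<Longrightarrow> (\<And>u. v \<le> u \<Longrightarrow> u \<le> 1 \<Longrightarrow> f u \<le> y) \<Longrightarrow> Rf f v \<le> y"
  unfolding Rf_def by (rule cSup_least) auto

lemma Lf_gt: assumes "bnd f" "0 \<le> v" "v \<le> 1" "y < Lf f v" obtains u where "0 \<le> u" "u \<le> v" "y < f u"
proof -
  have "\<exists>x\<in>f ` {0..v}. y < x" using assms less_cSup_iff[of "f ` {0..v}" y] bdd_img[of f "{0..v}"]
    unfolding Lf_def by auto
  then show ?thesis using that by auto
qed

lemma Rf_gt: assumes "bnd f" "0 \<le> v" "v \<le> 1" "y < Rf f v" obtains u where "v \<le> u" "u \<le> 1" "y < f u"
proof -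
  have "\<exists>x\<in>f ` {v..1}. y < x" using assms less_cSup_iff[of "f ` {v..1}" y] bdd_img[of f "{v..1}"]
    unfolding Rf_def by auto
  then show ?thesis using that by auto
qed

lemma Lf_bnd: "bnd f \<Longrightarrow> 0 \<le> v \<Longrightarrow> v \<le> 1 \<Longrightarrow> 0 \<le> Lf f v \<and> Lf f v \<le> 1"
proof -
  assume a: "bnd f" "0 \<le> v" "v \<le> 1"
  have "f v \<le> Lf f v" using a by (intro Lf_upper) auto
  moreover have "f v \<ge> 0" using a unfolding bnd_def by auto
  moreover have "Lf f v \<le> 1" using a by (intro Lf_least) (auto simp: bnd_def)
  ultimately show ?thesis by auto
qed

lemma Rf_bnd: "bnd f \<Longrightarrow> 0 \<le> v \<Longrightarrow> v \<le> 1 \<Longrightarrow> 0 \<le> Rf f v \<and> Rf f v \<le> 1"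
proof -
  assume a: "bnd f" "0 \<le> v" "v \<le> 1"
  have "f v \<le> Rf f v" using a by (intro Rf_upper) auto
  moreover have "f v \<ge> 0" using a unfolding bnd_def by auto
  moreover have "Rf f v \<le> 1" using a by (intro Rf_least) (auto simp: bnd_def)
  ultimately show ?thesis by auto
qed

lemma Lf_mono: "bnd f \<Longrightarrow> 0 \<le> u \<Longrightarrow> u \<le> v \<Longrightarrow> v \<le> 1 \<Longrightarrow> Lf f u \<le> Lf f v"
  by (rule Lf_least) (auto intro: Lf_upper)

lemma Rf_mono: "bnd f \<Longrightarrow> 0 \<le> u \<Longrightarrow> u \<le> v \<Longrightarrow> v \<le> 1 \<Longrightarrow> Rf f v \<le> Rf f u"
  by (rule Rf_least) (auto intro: Rf_upper)

lemma meet_formula: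
  assumes f: "bnd f" and g: "bnd g" and v: "0 \<le> v" "v \<le> 1"
  shows "fmeet f g v = max (min (f v) (Rf g v)) (min (Rf f v) (g v))"
proof -
  let ?S = "{min (f u) (g w) | u w. u \<in> {0..1} \<and> w \<in> {0..1} \<and> min u w = v}"
  have "Sup ?S = max (min (f v) (Rf g v)) (min (Rf f v) (g v))"
  proof (rule cSup_eq_non_empty)
    show "?S \<noteq> {}" using v by (auto intro!: exI[of _ v])
  next
    fix x assume "x \<in> ?S"
    then obtain u w where uw: "u \<in> {0..1}" "w \<in> {0..1}" "min u w = v" "x = min (f u) (g w)" by auto
    show "x \<le> max (min (f v) (Rf g v)) (min (Rf f v) (g v))"
    proof (cases "u \<le> w")
      case True
      then have "u = v" using uw by auto
      moreover have "g w \<le> Rf g v" using uw True g v \<open>u = v\<close> by (intro Rf_upper) auto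
      ultimately show ?thesis using uw by auto
    next
      case False
      then have "w = v" using uw by auto
      moreover have "f u \<le> Rf f v" using uw False f v \<open>w = v\<close> by (intro Rf_upper) auto
      ultimately show ?thesis using uw by auto
    qed
  next
    fix y assume ub: "\<And>x. x \<in> ?S \<Longrightarrow> x \<le> y"
    have 1: "min (f v) (Rf g v) \<le> y"
    proof (cases "f v \<le> y")
      case False
      have "Rf g v \<le> y"
      proof (rule Rf_least)
        fix w assume "v \<le> w" "w \<le> 1"
        then have "min (f v) (g w) \<le> y" using v by (intro ub) force
        then show "g w \<le> y" using False by auto
      qed (use v in auto)
      then show ?thesis by auto
    qed auto
    have 2: "min (Rf f v) (g v) \<le> y"
    proof (cases "g v \<le> y")
      case False
      have "Rf f v \<le> y"
      proof (rule Rf_least)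
        fix u assume "v \<le> u" "u \<le> 1"
        then have "min (f u) (g v) \<le> y" using v by (intro ub) force
        then show "f u \<le> y" using False by auto
      qed (use v in auto)
      then show ?thesis by auto
    qed auto
    show "max (min (f v) (Rf g v)) (min (Rf f v) (g v)) \<le> y" using 1 2 by auto
  qed
  then show ?thesis using v unfolding fmeet_def by auto
qed

lemma join_formula:
  assumes f: "bnd f" and g: "bnd g" and v: "0 \<le> v" "v \<le> 1"
  shows "fjoin f g v = max (min (f v) (Lf g v)) (min (Lf f v) (g v))"
proof -
  let ?S = "{min (f u) (g w) | u w. u \<in> {0..1} \<and> w \<in> {0..1} \<and> max u w = v}"
  have "Sup ?S = max (min (f v) (Lf g v)) (min (Lf f v) (g v))"
  proof (rule cSup_eq_non_empty)
    show "?S \<noteq> {}" using v by (auto intro!: exI[of _ v])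
  next
    fix x assume "x \<in> ?S"
    then obtain u w where uw: "u \<in> {0..1}" "w \<in> {0..1}" "max u w = v" "x = min (f u) (g w)" by auto
    show "x \<le> max (min (f v) (Lf g v)) (min (Lf f v) (g v))"
    proof (cases "w \<le> u")
      case True
      then have "u = v" using uw by auto
      moreover have "g w \<le> Lf g v" using uw True g v \<open>u = v\<close> by (intro Lf_upper) auto
      ultimately show ?thesis using uw by auto
    next
      case False
      then have "w = v" using uw by auto
      moreover have "f u \<le> Lf f v" using uw False f v \<open>w = v\<close> by (intro Lf_upper) auto
      ultimately show ?thesis using uw by auto
    qed
  next
    fix y assume ub: "\<And>x. x \<in> ?S \<Longrightarrow> x \<le> y"
    have 1: "min (f v) (Lf g v) \<le> y"
    proof (cases "f v \<le> y")
      case False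
      have "Lf g v \<le> y"
      proof (rule Lf_least)
        fix w assume "0 \<le> w" "w \<le> v"
        then have "min (f v) (g w) \<le> y" using v by (intro ub) force
        then show "g w \<le> y" using False by auto
      qed (use v in auto)
      then show ?thesis by auto
    qed auto
    have 2: "min (Lf f v) (g v) \<le> y"
    proof (cases "g v \<le> y")
      case False
      have "Lf f v \<le> y"
      proof (rule Lf_least)
        fix u assume "0 \<le> u" "u \<le> v"
        then have "min (f u) (g v) \<le> y" using v by (intro ub) force
        then show "f u \<le> y" using False by auto
      qed (use v in auto)
      then show ?thesis by auto
    qed auto
    show "max (min (f v) (Lf g v)) (min (Lf f v) (g v)) \<le> y" using 1 2 by auto
  qed
  then show ?thesis using v unfolding fjoin_def by auto
qed


lemma meet_bnd: "bnd f \<Longrightarrow> bnd g \<Longrightarrow> bnd (fmeet f g)"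
  unfolding bnd_def[of "fmeet f g"]
proof (intro ballI)
  fix v :: real assume a: "bnd f" "bnd g" "v \<in> {0..1}"
  then have "0 \<le> f v" "f v \<le> 1" "0 \<le> g v" "g v \<le> 1" by (auto simp: bnd_def)
  moreover have "0 \<le> Rf f v" "Rf f v \<le> 1" "0 \<le> Rf g v" "Rf g v \<le> 1"
    using Rf_bnd[of f v] Rf_bnd[of g v] a by auto
  ultimately show "0 \<le> fmeet f g v \<and> fmeet f g v \<le> 1" using meet_formula[of f g v] a by auto
qed

lemma join_bnd: "bnd f \<Longrightarrow> bnd g \<Longrightarrow> bnd (fjoin f g)"
  unfolding bnd_def[of "fjoin f g"]
proof (intro ballI)
  fix v :: real assume a: "bnd f" "bnd g" "v \<in> {0..1}"
  then have "0 \<le> f v" "f v \<le> 1" "0 \<le> g v" "g v \<le> 1" by (auto simp: bnd_def)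
  moreover have "0 \<le> Lf f v" "Lf f v \<le> 1" "0 \<le> Lf g v" "Lf g v \<le> 1"
    using Lf_bnd[of f v] Lf_bnd[of g v] a by auto
  ultimately show "0 \<le> fjoin f g v \<and> fjoin f g v \<le> 1" using join_formula[of f g v] a by auto
qed

lemma meet_R:
  assumes f: "bnd f" and g: "bnd g" and v: "0 \<le> v" "v \<le> 1"
  shows "Rf (fmeet f g) v = min (Rf f v) (Rf g v)"
proof (rule antisym)
  have h: "bnd (fmeet f g)" using f g by (rule meet_bnd)
  show "Rf (fmeet f g) v \<le> min (Rf f v) (Rf g v)"
  proof (rule Rf_least)
    fix x assume x: "v \<le> x" "x \<le> 1"
    have "f x \<le> Rf f v" "g x \<le> Rf g v" using f g x v by (auto intro: Rf_upper)
    moreover have "Rf g x \<le> Rf g v" "Rf f x \<le> Rf f v" using f g x v by (auto intro: Rf_mono)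
    ultimately show "fmeet f g x \<le> min (Rf f v) (Rf g v)"
      using meet_formula[of f g x] f g x v by auto
  qed (use v in auto)
  show "min (Rf f v) (Rf g v) \<le> Rf (fmeet f g) v"
  proof (rule ccontr)
    let ?y = "Rf (fmeet f g) v"
    assume "\<not> ?thesis"
    then have "?y < Rf f v" "?y < Rf g v" by auto
    then obtain u w where u: "v \<le> u" "u \<le> 1" "?y < f u" and w: "v \<le> w" "w \<le> 1" "?y < g w"
      using Rf_gt[OF f v] Rf_gt[OF g v] by metis
    show False
    proof (cases "u \<le> w")
      case True
      have "g w \<le> Rf g u" using g u w True v by (intro Rf_upper) auto
      then have "?y < fmeet f g u" using meet_formula[of f g u] f g u w u v by auto
      moreover have "fmeet f g u \<le> ?y" using h u v by (intro Rf_upper) auto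
      ultimately show False by auto
    next
      case False
      have "f u \<le> Rf f w" using f u w False v by (intro Rf_upper) auto
      then have "?y < fmeet f g w" using meet_formula[of f g w] f g w u v by auto
      moreover have "fmeet f g w \<le> ?y" using h w v by (intro Rf_upper) auto
      ultimately show False by auto
    qed
  qed
qed

lemma join_L:
  assumes f: "bnd f" and g: "bnd g" and v: "0 \<le> v" "v \<le> 1"
  shows "Lf (fjoin f g) v = min (Lf f v) (Lf g v)"
proof (rule antisym)
  have h: "bnd (fjoin f g)" using f g by (rule join_bnd)
  show "Lf (fjoin f g) v \<le> min (Lf f v) (Lf g v)"
  proof (rule Lf_least)
    fix x assume x: "0 \<le> x" "x \<le> v"
    have "f x \<le> Lf f v" "g x \<le> Lf g v" using f g x v by (auto intro: Lf_upper)
    moreover have "Lf g x \<le> Lf g v" "Lf f x \<le> Lf f v" using f g x v by (auto intro: Lf_mono)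
    ultimately show "fjoin f g x \<le> min (Lf f v) (Lf g v)"
      using join_formula[of f g x] f g x v by auto
  qed (use v in auto)
  show "min (Lf f v) (Lf g v) \<le> Lf (fjoin f g) v"
  proof (rule ccontr)
    let ?y = "Lf (fjoin f g) v"
    assume "\<not> ?thesis"
    then have "?y < Lf f v" "?y < Lf g v" by auto
    then obtain u w where u: "0 \<le> u" "u \<le> v" "?y < f u" and w: "0 \<le> w" "w \<le> v" "?y < g w"
      using Lf_gt[OF f v] Lf_gt[OF g v] by metis
    show False
    proof (cases "w \<le> u")
      case True
      have "g w \<le> Lf g u" using g u w True v by (intro Lf_upper) auto
      then have "?y < fjoin f g u" using join_formula[of f g u] f g u w u v by auto
      moreover have "fjoin f g u \<le> ?y" using h u v by (intro Lf_upper) auto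
      ultimately show False by auto
    next
      case False
      have "f u \<le> Lf f w" using f u w False v by (intro Lf_upper) auto
      then have "?y < fjoin f g w" using join_formula[of f g w] f g w u v by auto
      moreover have "fjoin f g w \<le> ?y" using h w v by (intro Lf_upper) auto
      ultimately show False by auto
    qed
  qed
qed


lemma meet_L:
  assumes f: "bnd f" and g: "bnd g" and af: "att f" and ag: "att g" and v: "0 \<le> v" "v \<le> 1"
  shows "Lf (fmeet f g) v = max (Lf f v) (Lf g v)"
proof (rule antisym)
  have h: "bnd (fmeet f g)" using f g by (rule meet_bnd)
  show "Lf (fmeet f g) v \<le> max (Lf f v) (Lf g v)"
  proof (rule Lf_least)
    fix x assume x: "0 \<le> x" "x \<le> v"
    have "f x \<le> Lf f v" "g x \<le> Lf g v" using f g x v by (auto intro: Lf_upper)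
    then show "fmeet f g x \<le> max (Lf f v) (Lf g v)"
      using meet_formula[of f g x] f g x v by auto
  qed (use v in auto)
  have A: "Lf f v \<le> Lf (fmeet f g) v"
  proof (rule Lf_least)
    fix u assume u: "0 \<le> u" "u \<le> v"
    obtain w0 where w0: "0 \<le> w0" "w0 \<le> 1" "g w0 = 1" using ag unfolding att_def by auto
    have fu: "f u \<le> 1" using f u v unfolding bnd_def by auto
    show "f u \<le> Lf (fmeet f g) v"
    proof (cases "u \<le> w0")
      case True
      have "g w0 \<le> Rf g u" using g u w0 True v by (intro Rf_upper) auto
      then have "f u \<le> fmeet f g u" using meet_formula[of f g u] f g u v w0 fu by auto
      moreover have "fmeet f g u \<le> Lf (fmeet f g) v" using h u v by (intro Lf_upper) auto
      ultimately show ?thesis by auto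
    next
      case False
      have "f u \<le> Rf f w0" using f u w0 False v by (intro Rf_upper) auto
      then have "f u \<le> fmeet f g w0" using meet_formula[of f g w0] f g u v w0 fu by auto
      moreover have "fmeet f g w0 \<le> Lf (fmeet f g) v" using h u v w0 False by (intro Lf_upper) auto
      ultimately show ?thesis by auto
    qed
  qed (use v in auto)
  have B: "Lf g v \<le> Lf (fmeet f g) v"
  proof (rule Lf_least)
    fix u assume u: "0 \<le> u" "u \<le> v"
    obtain w0 where w0: "0 \<le> w0" "w0 \<le> 1" "f w0 = 1" using af unfolding att_def by auto
    have fu: "g u \<le> 1" using g u v unfolding bnd_def by auto
    show "g u \<le> Lf (fmeet f g) v"
    proof (cases "u \<le> w0")
      case True
      have "f w0 \<le> Rf f u" using f u w0 True v by (intro Rf_upper) auto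
      then have "g u \<le> fmeet f g u" using meet_formula[of f g u] f g u v w0 fu by auto
      moreover have "fmeet f g u \<le> Lf (fmeet f g) v" using h u v by (intro Lf_upper) auto
      ultimately show ?thesis by auto
    next
      case False
      have "g u \<le> Rf g w0" using g u w0 False v by (intro Rf_upper) auto
      then have "g u \<le> fmeet f g w0" using meet_formula[of f g w0] f g u v w0 fu by auto
      moreover have "fmeet f g w0 \<le> Lf (fmeet f g) v" using h u v w0 False by (intro Lf_upper) auto
      ultimately show ?thesis by auto
    qed
  qed (use v in auto)
  show "max (Lf f v) (Lf g v) \<le> Lf (fmeet f g) v" using A B by auto
qed

lemma join_R:
  assumes f: "bnd f" and g: "bnd g" and af: "att f" and ag: "att g" and v: "0 \<le> v" "v \<le> 1"
  shows "Rf (fjoin f g) v = max (Rf f v) (Rf g v)"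
proof (rule antisym)
  have h: "bnd (fjoin f g)" using f g by (rule join_bnd)
  show "Rf (fjoin f g) v \<le> max (Rf f v) (Rf g v)"
  proof (rule Rf_least)
    fix x assume x: "v \<le> x" "x \<le> 1"
    have "f x \<le> Rf f v" "g x \<le> Rf g v" using f g x v by (auto intro: Rf_upper)
    then show "fjoin f g x \<le> max (Rf f v) (Rf g v)"
      using join_formula[of f g x] f g x v by auto
  qed (use v in auto)
  have A: "Rf f v \<le> Rf (fjoin f g) v"
  proof (rule Rf_least)
    fix u assume u: "v \<le> u" "u \<le> 1"
    obtain w0 where w0: "0 \<le> w0" "w0 \<le> 1" "g w0 = 1" using ag unfolding att_def by auto
    have fu: "f u \<le> 1" using f u v unfolding bnd_def by auto
    show "f u \<le> Rf (fjoin f g) v"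
    proof (cases "w0 \<le> u")
      case True
      have "g w0 \<le> Lf g u" using g u w0 True v by (intro Lf_upper) auto
      then have "f u \<le> fjoin f g u" using join_formula[of f g u] f g u v w0 fu by auto
      moreover have "fjoin f g u \<le> Rf (fjoin f g) v" using h u v by (intro Rf_upper) auto
      ultimately show ?thesis by auto
    next
      case False
      have "f u \<le> Lf f w0" using f u w0 False v by (intro Lf_upper) auto
      then have "f u \<le> fjoin f g w0" using join_formula[of f g w0] f g u v w0 fu by auto
      moreover have "fjoin f g w0 \<le> Rf (fjoin f g) v" using h u v w0 False by (intro Rf_upper) auto
      ultimately show ?thesis by auto
    qed
  qed (use v in auto)
  have B: "Rf g v \<le> Rf (fjoin f g) v"
  proof (rule Rf_least)
    fix u assume u: "v \<le> u" "u \<le> 1"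
    obtain w0 where w0: "0 \<le> w0" "w0 \<le> 1" "f w0 = 1" using af unfolding att_def by auto
    have fu: "g u \<le> 1" using g u v unfolding bnd_def by auto
    show "g u \<le> Rf (fjoin f g) v"
    proof (cases "w0 \<le> u")
      case True
      have "f w0 \<le> Lf f u" using f u w0 True v by (intro Lf_upper) auto
      then have "g u \<le> fjoin f g u" using join_formula[of f g u] f g u v w0 fu by auto
      moreover have "fjoin f g u \<le> Rf (fjoin f g) v" using h u v by (intro Rf_upper) auto
      ultimately show ?thesis by auto
    next
      case False
      have "g u \<le> Lf g w0" using g u w0 False v by (intro Lf_upper) auto
      then have "g u \<le> fjoin f g w0" using join_formula[of f g w0] f g u v w0 fu by auto
      moreover have "fjoin f g w0 \<le> Rf (fjoin f g) v" using h u v w0 False by (intro Rf_upper) auto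
      ultimately show ?thesis by auto
    qed
  qed (use v in auto)
  show "max (Rf f v) (Rf g v) \<le> Rf (fjoin f g) v" using A B by auto
qed

lemma meet_att: assumes f: "bnd f" and g: "bnd g" and af: "att f" and ag: "att g"
  shows "att (fmeet f g)"
proof -
  obtain u0 where u0: "0 \<le> u0" "u0 \<le> 1" "f u0 = 1" using af unfolding att_def by auto
  obtain w0 where w0: "0 \<le> w0" "w0 \<le> 1" "g w0 = 1" using ag unfolding att_def by auto
  have h: "bnd (fmeet f g)" using f g by (rule meet_bnd)
  show ?thesis
  proof (cases "u0 \<le> w0")
    case True
    have "g w0 \<le> Rf g u0" using g u0 w0 True by (intro Rf_upper) auto
    then have "1 \<le> fmeet f g u0" using meet_formula[of f g u0] f g u0 w0 by auto
    then show ?thesis using h u0 unfolding att_def bnd_def by (intro bexI[of _ u0]) force+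
  next
    case False
    have "f u0 \<le> Rf f w0" using f u0 w0 False by (intro Rf_upper) auto
    then have "1 \<le> fmeet f g w0" using meet_formula[of f g w0] f g u0 w0 by auto
    then show ?thesis using h w0 unfolding att_def bnd_def by (intro bexI[of _ w0]) force+
  qed
qed

lemma join_att: assumes f: "bnd f" and g: "bnd g" and af: "att f" and ag: "att g"
  shows "att (fjoin f g)"
proof -
  obtain u0 where u0: "0 \<le> u0" "u0 \<le> 1" "f u0 = 1" using af unfolding att_def by auto
  obtain w0 where w0: "0 \<le> w0" "w0 \<le> 1" "g w0 = 1" using ag unfolding att_def by auto
  have h: "bnd (fjoin f g)" using f g by (rule join_bnd)
  show ?thesis
  proof (cases "w0 \<le> u0")
    case True
    have "g w0 \<le> Lf g u0" using g u0 w0 True by (intro Lf_upper) auto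
    then have "1 \<le> fjoin f g u0" using join_formula[of f g u0] f g u0 w0 by auto
    then show ?thesis using h u0 unfolding att_def bnd_def by (intro bexI[of _ u0]) force+
  next
    case False
    have "f u0 \<le> Lf f w0" using f u0 w0 False by (intro Lf_upper) auto
    then have "1 \<le> fjoin f g w0" using join_formula[of f g w0] f g u0 w0 by auto
    then show ?thesis using h w0 unfolding att_def bnd_def by (intro bexI[of _ w0]) force+
  qed
qed

lemma meet_PP: assumes "PP f" "PP g" shows "PP (fmeet f g)"
proof -
  have f: "bnd f" "att f" "cvx f" and g: "bnd g" "att g" "cvx g" using assms by (auto simp: PP_def)
  have "cvx (fmeet f g)" unfolding cvx_def
  proof
    fix v :: real assume "v \<in> {0..1}"
    then have v: "0 \<le> v" "v \<le> 1" by auto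
    have "f v = min (Lf f v) (Rf f v)" "g v = min (Lf g v) (Rf g v)" using f g v by (auto simp: cvx_def)
    then show "fmeet f g v = min (Lf (fmeet f g) v) (Rf (fmeet f g) v)"
      using meet_formula[of f g v] meet_L[of f g v] meet_R[of f g v] f g v
      by (auto simp: min_def max_def)
  qed
  then show ?thesis using f g meet_bnd meet_att by (auto simp: PP_def)
qed

lemma join_PP: assumes "PP f" "PP g" shows "PP (fjoin f g)"
proof -
  have f: "bnd f" "att f" "cvx f" and g: "bnd g" "att g" "cvx g" using assms by (auto simp: PP_def)
  have "cvx (fjoin f g)" unfolding cvx_def
  proof
    fix v :: real assume "v \<in> {0..1}"
    then have v: "0 \<le> v" "v \<le> 1" by auto
    have "f v = min (Lf f v) (Rf f v)" "g v = min (Lf g v) (Rf g v)" using f g v by (auto simp: cvx_def)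
    then show "fjoin f g v = min (Lf (fjoin f g) v) (Rf (fjoin f g) v)"
      using join_formula[of f g v] join_L[of f g v] join_R[of f g v] f g v
      by (auto simp: min_def max_def)
  qed
  then show ?thesis using f g join_bnd join_att by (auto simp: PP_def)
qed

lemma NCFD_PP: assumes "f \<in> NCFD" shows "PP f"
proof -
  have b: "bnd f" and a: "att f" using assms by (auto simp: NCFD_def bnd_def att_def)
  have "cvx f" unfolding cvx_def
  proof
    fix v :: real assume "v \<in> {0..1}"
    then have v: "0 \<le> v" "v \<le> 1" by auto
    have "f v \<le> Lf f v" "f v \<le> Rf f v" using b v by (auto intro: Lf_upper Rf_upper)
    moreover have "\<not> f v < min (Lf f v) (Rf f v)"
    proof
      assume "f v < min (Lf f v) (Rf f v)"
      then obtain u w where "0 \<le> u" "u \<le> v" "f v < f u" "v \<le> w" "w \<le> 1" "f v < f w"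
        using Lf_gt[OF b v, of "f v"] Rf_gt[OF b v, of "f v"] by (metis min_less_iff_conj)
      moreover have "\<forall>ui uj uk. 0 \<le> ui \<and> ui \<le> uj \<and> uj \<le> uk \<and> uk \<le> 1 \<longrightarrow> f uj \<ge> min (f ui) (f uk)"
        using assms by (simp add: NCFD_def)
      ultimately show False by (metis min_less_iff_conj not_less)
    qed
    ultimately show "f v = min (Lf f v) (Rf f v)" by auto
  qed
  then show ?thesis using a b by (simp add: PP_def)
qed


lemma PP_ext:
  assumes "PP f" "PP g" "\<And>v. v \<notin> {0..1} \<Longrightarrow> f v = 0" "\<And>v. v \<notin> {0..1} \<Longrightarrow> g v = 0"
    and "\<And>v. 0 \<le> v \<Longrightarrow> v \<le> 1 \<Longrightarrow> Lf f v = Lf g v \<and> Rf f v = Rf g v"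
  shows "f = g"
proof
  fix v show "f v = g v"
  proof (cases "v \<in> {0..1}")
    case True
    then show ?thesis using assms(1,2) assms(5)[of v] by (auto simp: PP_def cvx_def)
  qed (use assms in auto)
qed

lemma bigjoin_props:
  "(\<forall>i<Suc n. PP (F i)) \<Longrightarrow> PP (bigjoin F (Suc n)) \<and>
     (\<forall>v. 0 \<le> v \<longrightarrow> v \<le> 1 \<longrightarrow> Lf (bigjoin F (Suc n)) v = Min ((\<lambda>i. Lf (F i) v) ` {..<Suc n})
        \<and> Rf (bigjoin F (Suc n)) v = Max ((\<lambda>i. Rf (F i) v) ` {..<Suc n}))"
proof (induction n)
  case 0
  then show ?case by (simp add: lessThan_Suc)
next
  case (Suc n)
  then have IH: "PP (bigjoin F (Suc n))"
     "\<And>v. 0 \<le> v \<Longrightarrow> v \<le> 1 \<Longrightarrow> Lf (bigjoin F (Suc n)) v = Min ((\<lambda>i. Lf (F i) v) ` {..<Suc n})"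
     "\<And>v. 0 \<le> v \<Longrightarrow> v \<le> 1 \<Longrightarrow> Rf (bigjoin F (Suc n)) v = Max ((\<lambda>i. Rf (F i) v) ` {..<Suc n})"
    by auto
  have Fs: "PP (F (Suc n))" using Suc.prems by auto
  have eq: "bigjoin F (Suc (Suc n)) = fjoin (bigjoin F (Suc n)) (F (Suc n))" by simp
  show ?case unfolding eq
  proof (intro conjI allI impI)
    show "PP (fjoin (bigjoin F (Suc n)) (F (Suc n)))" using IH(1) Fs by (rule join_PP)
  next
    fix v :: real assume v: "0 \<le> v" "v \<le> 1"
    have bb: "bnd (bigjoin F (Suc n))" "att (bigjoin F (Suc n))" "bnd (F (Suc n))" "att (F (Suc n))"
      using IH(1) Fs by (auto simp: PP_def)
    have S: "{..<Suc (Suc n)} = insert (Suc n) {..<Suc n}" by auto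
    have m: "Min (insert (Lf (F (Suc n)) v) ((\<lambda>i. Lf (F i) v) ` {..<Suc n}))
       = min (Lf (F (Suc n)) v) (Min ((\<lambda>i. Lf (F i) v) ` {..<Suc n}))"
      by (rule Min_insert) auto
    have M: "Max (insert (Rf (F (Suc n)) v) ((\<lambda>i. Rf (F i) v) ` {..<Suc n}))
       = max (Rf (F (Suc n)) v) (Max ((\<lambda>i. Rf (F i) v) ` {..<Suc n}))"
      by (rule Max_insert) auto
    show "Lf (fjoin (bigjoin F (Suc n)) (F (Suc n))) v = Min ((\<lambda>i. Lf (F i) v) ` {..<Suc (Suc n)})"
      unfolding S image_insert m join_L[OF bb(1) bb(3) v] IH(2)[OF v] by (rule min.commute)
    show "Rf (fjoin (bigjoin F (Suc n)) (F (Suc n))) v = Max ((\<lambda>i. Rf (F i) v) ` {..<Suc (Suc n)})"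
      unfolding S image_insert M join_R[OF bb(1) bb(3) bb(2) bb(4) v] IH(3)[OF v] by (rule max.commute)
  qed
qed

lemma bigjoin_zero: "v \<notin> {0..1} \<Longrightarrow> (\<And>i. F i v = 0) \<Longrightarrow> bigjoin F (Suc n) v = 0"
  by (cases n) (auto simp: fjoin_def)

lemma gen_sup:
  fixes a b c d :: "nat \<Rightarrow> 'a::distrib_lattice"
  assumes "0 < m" "0 < s"
  shows "Sup_fin ((\<lambda>y. inf (inf (a (y div s)) (b (y mod s))) (inf (c (y div s)) (d (y mod s)))) ` {..<m*s})
    = inf (Sup_fin ((\<lambda>u. inf (a u) (c u)) ` {..<m})) (Sup_fin ((\<lambda>w. inf (b w) (d w)) ` {..<s}))"
proof -
  have "inf (Sup_fin ((\<lambda>u. inf (a u) (c u)) ` {..<m})) (Sup_fin ((\<lambda>w. inf (b w) (d w)) ` {..<s}))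
     = Sup_fin {inf x y |x y. x \<in> (\<lambda>u. inf (a u) (c u)) ` {..<m} \<and> y \<in> (\<lambda>w. inf (b w) (d w)) ` {..<s}}"
    using assms by (intro inf_Sup2_distrib) auto
  also have "{inf x y |x y. x \<in> (\<lambda>u. inf (a u) (c u)) ` {..<m} \<and> y \<in> (\<lambda>w. inf (b w) (d w)) ` {..<s}}
     = (\<lambda>y. inf (inf (a (y div s)) (b (y mod s))) (inf (c (y div s)) (d (y mod s)))) ` {..<m*s}"
  proof (rule set_eqI, rule iffI)
    fix t assume "t \<in> {inf x y |x y. x \<in> (\<lambda>u. inf (a u) (c u)) ` {..<m} \<and> y \<in> (\<lambda>w. inf (b w) (d w)) ` {..<s}}"
    then obtain u w where uw: "u < m" "w < s" "t = inf (inf (a u) (c u)) (inf (b w) (d w))" by auto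
    have "u * s + w < m * s"
    proof -
      have "u * s + w < u * s + s" using uw by auto
      also have "\<dots> = Suc u * s" by simp
      also have "\<dots> \<le> m * s" using uw by (intro mult_right_mono) auto
      finally show ?thesis .
    qed
    moreover have "(u * s + w) div s = u" "(u * s + w) mod s = w" using uw by auto
    ultimately show "t \<in> (\<lambda>y. inf (inf (a (y div s)) (b (y mod s))) (inf (c (y div s)) (d (y mod s)))) ` {..<m*s}"
      using uw by (auto simp: inf_aci intro!: image_eqI[of _ _ "u * s + w"])
  next
    fix t assume "t \<in> (\<lambda>y. inf (inf (a (y div s)) (b (y mod s))) (inf (c (y div s)) (d (y mod s)))) ` {..<m*s}"
    then obtain y where y: "y < m * s" "t = inf (inf (a (y div s)) (b (y mod s))) (inf (c (y div s)) (d (y mod s)))" by auto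
    have "y div s < m" using y by (simp add: less_mult_imp_div_less)
    moreover have "y mod s < s" using assms by auto
    ultimately show "t \<in> {inf x y |x y. x \<in> (\<lambda>u. inf (a u) (c u)) ` {..<m} \<and> y \<in> (\<lambda>w. inf (b w) (d w)) ` {..<s}}"
      using y by (intro CollectI exI[of _ "inf (a (y div s)) (c (y div s))"] exI[of _ "inf (b (y mod s)) (d (y mod s))"]) (auto simp: inf_aci)
  qed
  finally show ?thesis by simp
qed

lemma gen_inf:
  fixes a b c d :: "nat \<Rightarrow> 'a::distrib_lattice"
  assumes "0 < m" "0 < s"
  shows "Inf_fin ((\<lambda>y. sup (sup (a (y div s)) (b (y mod s))) (sup (c (y div s)) (d (y mod s)))) ` {..<m*s})
    = sup (Inf_fin ((\<lambda>u. sup (a u) (c u)) ` {..<m})) (Inf_fin ((\<lambda>w. sup (b w) (d w)) ` {..<s}))"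
proof -
  have "sup (Inf_fin ((\<lambda>u. sup (a u) (c u)) ` {..<m})) (Inf_fin ((\<lambda>w. sup (b w) (d w)) ` {..<s}))
     = Inf_fin {sup x y |x y. x \<in> (\<lambda>u. sup (a u) (c u)) ` {..<m} \<and> y \<in> (\<lambda>w. sup (b w) (d w)) ` {..<s}}"
    using assms by (intro sup_Inf2_distrib) auto
  also have "{sup x y |x y. x \<in> (\<lambda>u. sup (a u) (c u)) ` {..<m} \<and> y \<in> (\<lambda>w. sup (b w) (d w)) ` {..<s}}
     = (\<lambda>y. sup (sup (a (y div s)) (b (y mod s))) (sup (c (y div s)) (d (y mod s)))) ` {..<m*s}"
  proof (rule set_eqI, rule iffI)
    fix t assume "t \<in> {sup x y |x y. x \<in> (\<lambda>u. sup (a u) (c u)) ` {..<m} \<and> y \<in> (\<lambda>w. sup (b w) (d w)) ` {..<s}}"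
    then obtain u w where uw: "u < m" "w < s" "t = sup (sup (a u) (c u)) (sup (b w) (d w))" by auto
    have "u * s + w < m * s"
    proof -
      have "u * s + w < u * s + s" using uw by auto
      also have "\<dots> = Suc u * s" by simp
      also have "\<dots> \<le> m * s" using uw by (intro mult_right_mono) auto
      finally show ?thesis .
    qed
    moreover have "(u * s + w) div s = u" "(u * s + w) mod s = w" using uw by auto
    ultimately show "t \<in> (\<lambda>y. sup (sup (a (y div s)) (b (y mod s))) (sup (c (y div s)) (d (y mod s)))) ` {..<m*s}"
      using uw by (auto simp: sup_aci intro!: image_eqI[of _ _ "u * s + w"])
  next
    fix t assume "t \<in> (\<lambda>y. sup (sup (a (y div s)) (b (y mod s))) (sup (c (y div s)) (d (y mod s)))) ` {..<m*s}"
    then obtain y where y: "y < m * s" "t = sup (sup (a (y div s)) (b (y mod s))) (sup (c (y div s)) (d (y mod s)))" by auto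
    have "y div s < m" using y by (simp add: less_mult_imp_div_less)
    moreover have "y mod s < s" using assms by auto
    ultimately show "t \<in> {sup x y |x y. x \<in> (\<lambda>u. sup (a u) (c u)) ` {..<m} \<and> y \<in> (\<lambda>w. sup (b w) (d w)) ` {..<s}}"
      using y by (intro CollectI exI[of _ "sup (a (y div s)) (c (y div s))"] exI[of _ "sup (b (y mod s)) (d (y mod s))"]) (auto simp: sup_aci)
  qed
  finally show ?thesis by simp
qed

lemma real_maxmin:
  fixes a b c d :: "nat \<Rightarrow> real"
  assumes "0 < m" "0 < s"
  shows "Max ((\<lambda>y. min (min (a (y div s)) (b (y mod s))) (min (c (y div s)) (d (y mod s)))) ` {..<m*s})
    = min (Max ((\<lambda>u. min (a u) (c u)) ` {..<m})) (Max ((\<lambda>w. min (b w) (d w)) ` {..<s}))"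
  using gen_sup[OF assms, of a b c d] by (simp add: Sup_fin_Max inf_min)

lemma real_minmax:
  fixes a b c d :: "nat \<Rightarrow> real"
  assumes "0 < m" "0 < s"
  shows "Min ((\<lambda>y. max (max (a (y div s)) (b (y mod s))) (max (c (y div s)) (d (y mod s)))) ` {..<m*s})
    = max (Min ((\<lambda>u. max (a u) (c u)) ` {..<m})) (Min ((\<lambda>w. max (b w) (d w)) ` {..<s}))"
  using gen_inf[OF assms, of a b c d] by (simp add: Inf_fin_Min sup_max)


lemma meetPP_L: "PP f \<Longrightarrow> PP g \<Longrightarrow> 0 \<le> v \<Longrightarrow> v \<le> 1 \<Longrightarrow> Lf (fmeet f g) v = max (Lf f v) (Lf g v)"
  by (rule meet_L) (auto simp: PP_def)
lemma meetPP_R: "PP f \<Longrightarrow> PP g \<Longrightarrow> 0 \<le> v \<Longrightarrow> v \<le> 1 \<Longrightarrow> Rf (fmeet f g) v = min (Rf f v) (Rf g v)"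
  by (rule meet_R) (auto simp: PP_def)

theorem lemma1:
  fixes A B C D :: fmat and k m p s n r :: nat
  assumes "0 < k" "0 < m" "0 < p" "0 < s" "0 < n" "0 < r"
    and "fmat_in k m A" and "fmat_in p s B" and "fmat_in m n C" and "fmat_in s r D"
  shows "\<forall>x < k * p. \<forall>z < n * r.
           fcomp (m * s) (ftensor p s A B) (ftensor s r C D) x z
           = ftensor p r (fcomp m A C) (fcomp s B D) x z"
proof (intro allI impI)
  fix x z assume x: "x < k * p" and z: "z < n * r"
  define i where "i = x div p"
  define i' where "i' = x mod p"
  define j where "j = z div r"
  define j' where "j' = z mod r"
  have ii: "i < k" "i' < p" "j < n" "j' < r" using x z assms(3,6)
    by (auto simp: i_def i'_def j_def j'_def less_mult_imp_div_less)
  have PA: "\<And>u. u < m \<Longrightarrow> PP (A i u)" and PC: "\<And>u. u < m \<Longrightarrow> PP (C u j)"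
    and PB: "\<And>w. w < s \<Longrightarrow> PP (B i' w)" and PD: "\<And>w. w < s \<Longrightarrow> PP (D w j')"
    using assms(7-10) ii by (auto simp: fmat_in_def intro: NCFD_PP)
  define G where "G y = fmeet (fmeet (A i (y div s)) (B i' (y mod s))) (fmeet (C (y div s) j) (D (y mod s) j'))" for y
  define F1 where "F1 u = fmeet (A i u) (C u j)" for u
  define F2 where "F2 w = fmeet (B i' w) (D w j')" for w
  have lhs: "fcomp (m * s) (ftensor p s A B) (ftensor s r C D) x z = bigjoin G (m * s)"
    unfolding fcomp_def ftensor_def G_def i_def i'_def j_def j'_def by simp
  have rhs: "ftensor p r (fcomp m A C) (fcomp s B D) x z = fmeet (bigjoin F1 m) (bigjoin F2 s)"
    unfolding fcomp_def ftensor_def F1_def F2_def i_def i'_def j_def j'_def by simp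
  obtain N where N: "m * s = Suc N" using assms(2,4) by (metis mult_pos_pos not0_implies_Suc not_gr0)
  obtain M1 where M1: "m = Suc M1" using assms(2) by (metis not0_implies_Suc not_gr0)
  obtain S1 where S1: "s = Suc S1" using assms(4) by (metis not0_implies_Suc not_gr0)
  have yy: "y div s < m" "y mod s < s" if "y < m * s" for y
    using that assms(4) by (auto simp: less_mult_imp_div_less)
  have PG: "\<forall>y<Suc N. PP (G y)"
    using yy PA PB PC PD N unfolding G_def by (metis meet_PP)
  have PF1: "\<forall>u<Suc M1. PP (F1 u)" using PA PC M1 unfolding F1_def by (auto intro: meet_PP)
  have PF2: "\<forall>w<Suc S1. PP (F2 w)" using PB PD S1 unfolding F2_def by (auto intro: meet_PP)
  note BG = bigjoin_props[OF PG] and B1 = bigjoin_props[OF PF1] and B2 = bigjoin_props[OF PF2]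
  show "fcomp (m * s) (ftensor p s A B) (ftensor s r C D) x z
           = ftensor p r (fcomp m A C) (fcomp s B D) x z"
    unfolding lhs rhs
  proof (rule PP_ext)
    show "PP (bigjoin G (m * s))" using BG N by auto
    show "PP (fmeet (bigjoin F1 m) (bigjoin F2 s))" using B1 B2 M1 S1 by (auto intro: meet_PP)
    fix v :: real
    show "v \<notin> {0..1} \<Longrightarrow> bigjoin G (m * s) v = 0"
      unfolding N by (rule bigjoin_zero) (auto simp: G_def fmeet_def)
    show "v \<notin> {0..1} \<Longrightarrow> fmeet (bigjoin F1 m) (bigjoin F2 s) v = 0" unfolding fmeet_def by auto
    assume v: "0 \<le> v" "v \<le> 1"
    have GL: "Lf (G y) v = max (max (Lf (A i (y div s)) v) (Lf (B i' (y mod s)) v))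
                                (max (Lf (C (y div s) j) v) (Lf (D (y mod s) j') v))"
      and GR: "Rf (G y) v = min (min (Rf (A i (y div s)) v) (Rf (B i' (y mod s)) v))
                                (min (Rf (C (y div s) j) v) (Rf (D (y mod s) j') v))"
      if "y < m * s" for y
      using yy[OF that] PA PB PC PD v unfolding G_def
      by (simp_all add: meetPP_L meetPP_R meet_PP)
    have F1L: "Lf (F1 u) v = max (Lf (A i u) v) (Lf (C u j) v)" and F1R: "Rf (F1 u) v = min (Rf (A i u) v) (Rf (C u j) v)"
      if "u < m" for u using that PA PC v unfolding F1_def by (simp_all add: meetPP_L meetPP_R)
    have F2L: "Lf (F2 w) v = max (Lf (B i' w) v) (Lf (D w j') v)" and F2R: "Rf (F2 w) v = min (Rf (B i' w) v) (Rf (D w j') v)"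
      if "w < s" for w using that PB PD v unfolding F2_def by (simp_all add: meetPP_L meetPP_R)
    have PX: "PP (bigjoin F1 m)" "PP (bigjoin F2 s)" using B1 B2 M1 S1 by auto
    have "Lf (bigjoin G (m * s)) v = Min ((\<lambda>y. Lf (G y) v) ` {..<m * s})" using BG v unfolding N by auto
    also have "\<dots> = Min ((\<lambda>y. max (max (Lf (A i (y div s)) v) (Lf (B i' (y mod s)) v))
                                (max (Lf (C (y div s) j) v) (Lf (D (y mod s) j') v))) ` {..<m * s})"
      by (rule arg_cong[where f=Min], rule image_cong) (auto simp: GL)
    also have "\<dots> = max (Min ((\<lambda>u. max (Lf (A i u) v) (Lf (C u j) v)) ` {..<m}))
                         (Min ((\<lambda>w. max (Lf (B i' w) v) (Lf (D w j') v)) ` {..<s}))"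
      by (rule real_minmax[OF assms(2,4)])
    also have "\<dots> = max (Min ((\<lambda>u. Lf (F1 u) v) ` {..<m})) (Min ((\<lambda>w. Lf (F2 w) v) ` {..<s}))"
      by (intro arg_cong2[where f=max] arg_cong[where f=Min] image_cong) (auto simp: F1L F2L)
    also have "\<dots> = Lf (fmeet (bigjoin F1 m) (bigjoin F2 s)) v"
      using B1 B2 M1 S1 v PX by (simp add: meetPP_L)
    finally have L: "Lf (bigjoin G (m * s)) v = Lf (fmeet (bigjoin F1 m) (bigjoin F2 s)) v" .
    have "Rf (bigjoin G (m * s)) v = Max ((\<lambda>y. Rf (G y) v) ` {..<m * s})" using BG v unfolding N by auto
    also have "\<dots> = Max ((\<lambda>y. min (min (Rf (A i (y div s)) v) (Rf (B i' (y mod s)) v))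
                                (min (Rf (C (y div s) j) v) (Rf (D (y mod s) j') v))) ` {..<m * s})"
      by (rule arg_cong[where f=Max], rule image_cong) (auto simp: GR)
    also have "\<dots> = min (Max ((\<lambda>u. min (Rf (A i u) v) (Rf (C u j) v)) ` {..<m}))
                         (Max ((\<lambda>w. min (Rf (B i' w) v) (Rf (D w j') v)) ` {..<s}))"
      by (rule real_maxmin[OF assms(2,4)])
    also have "\<dots> = min (Max ((\<lambda>u. Rf (F1 u) v) ` {..<m})) (Max ((\<lambda>w. Rf (F2 w) v) ` {..<s}))"
      by (intro arg_cong2[where f=min] arg_cong[where f=Max] image_cong) (auto simp: F1R F2R)
    also have "\<dots> = Rf (fmeet (bigjoin F1 m) (bigjoin F2 s)) v"
      using B1 B2 M1 S1 v PX by (simp add: meetPP_R)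
    finally show "Lf (bigjoin G (m * s)) v = Lf (fmeet (bigjoin F1 m) (bigjoin F2 s)) v \<and>
       Rf (bigjoin G (m * s)) v = Rf (fmeet (bigjoin F1 m) (bigjoin F2 s)) v" using L by simp
  qed
qed

end
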